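(* Let $\mathcal H_\mathbb R$ be a real Hilbert space with $\dim\mathcal H_\mathbb R>2$. Then the Banach–Lie algebra $\mathfrak o(\mathcal H_\mathbb R)$ has no non-trivial open invariant cones: every non-empty open convex cone in $\mathfrak o(\mathcal H_\mathbb R)$ invariant under the adjoint action of $O(\mathcal H_\mathbb R)$ equals $\mathfrak o(\mathcal H_\mathbb R)$.
   Context: $\mathfrak o(\mathcal H_\mathbb R)$ denotes the Banach–Lie algebra of bounded skew-symmetric operators on $\mathcal H_\mathbb R$ (operator norm), with adjoint action $x\mapsto gxg^{-1}$ of the orthogonal group $O(\mathcal H_\mathbb R)$. A convex cone $W$ satisfies $W+W\subseteq W$, $tW\subseteq W$ for $t>0$. *)

theory Defs
  imports "HOL-Analysis.Analysis"
begin

definition skew_ops :: "('a::real_inner \<Rightarrow>\<^sub>L 'a) set" where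
  "skew_ops = {A. \<forall>x y. inner (blinfun_apply A x) y = - inner x (blinfun_apply A y)}"

definition orth_group :: "('a::real_inner \<Rightarrow>\<^sub>L 'a) set" where
  "orth_group = {g. (\<forall>x y. inner (blinfun_apply g x) (blinfun_apply g y) = inner x y)
                     \<and> surj (blinfun_apply g)}"

definition convex_cone_set :: "'b::real_vector set \<Rightarrow> bool" where
  "convex_cone_set W \<longleftrightarrow> (\<forall>x\<in>W. \<forall>y\<in>W. x + y \<in> W) \<and> (\<forall>t>0. \<forall>x\<in>W. scaleR t x \<in> W)"

definition Ad_invariant :: "('a::real_inner \<Rightarrow>\<^sub>L 'a) set \<Rightarrow> bool" where
  "Ad_invariant W \<longleftrightarrow> (\<forall>g\<in>orth_group. \<forall>h. g o\<^sub>L h = id_blinfun \<and> h o\<^sub>L g = id_blinfun \<longrightarrow>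
      (\<forall>x\<in>W. g o\<^sub>L x o\<^sub>L h \<in> W))"

end

theory Submission
  imports Defs
begin

lemma orth_compl_closed_subspace:
  fixes B :: "'a::real_inner set"
  shows "subspace {a. \<forall>b\<in>B. inner a b = 0}" and "closed {a. \<forall>b\<in>B. inner a b = 0}"
proof -
  show "subspace {a. \<forall>b\<in>B. inner a b = 0}"
    by (auto simp: subspace_def inner_add_left)
  have eq: "{a. \<forall>b\<in>B. inner a b = 0} = (\<Inter>b\<in>B. {a. inner a b = 0})" by auto
  have "closed {a. inner a b = 0}" for b
    using closed_hyperplane[of b 0] by (simp add: inner_commute)
  then show "closed {a. \<forall>b\<in>B. inner a b = 0}" unfolding eq by (intro closed_INT) auto
qed

lemma orth_closure_span:
  fixes A B :: "'a::real_inner set"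
  assumes "\<forall>a\<in>A. \<forall>b\<in>B. inner a b = 0"
  shows "\<forall>a\<in>closure (span A). \<forall>b\<in>closure (span B). inner a b = 0"
proof -
  define C where "C = closure (span A)"
  have 1: "C \<subseteq> {a. \<forall>b\<in>B. inner a b = 0}" unfolding C_def
    apply (rule closure_minimal)
     apply (rule span_minimal)
    using assms apply blast
     apply (rule orth_compl_closed_subspace)
    apply (rule orth_compl_closed_subspace)
    done
  have "B \<subseteq> {b. \<forall>a\<in>C. inner b a = 0}"
  proof (intro subsetI CollectI ballI)
    fix b a assume "b \<in> B" "a \<in> C"
    then have "inner a b = 0" using 1 by blast
    then show "inner b a = 0" by (simp add: inner_commute)
  qed
  hence 2: "closure (span B) \<subseteq> {b. \<forall>a\<in>C. inner b a = 0}"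
    by (intro closure_minimal span_minimal orth_compl_closed_subspace)
  show ?thesis
  proof (intro ballI)
    fix a b assume "a \<in> closure (span A)" "b \<in> closure (span B)"
    then have "inner b a = 0" using 2 by (auto simp: C_def)
    then show "inner a b = 0" by (simp add: inner_commute)
  qed
qed

lemma parallelogram_law:
  fixes a b :: "'a::real_inner"
  shows "norm (a - b)^2 + norm (a + b)^2 = 2*norm a^2 + 2*norm b^2"
proof -
  have "norm (a - b)^2 = inner a a - 2 * inner a b + inner b b"
    by (simp add: power2_norm_eq_inner inner_diff_left inner_diff_right inner_commute[of b a])
  moreover have "norm (a + b)^2 = inner a a + 2 * inner a b + inner b b"
    by (simp add: power2_norm_eq_inner inner_add_left inner_add_right inner_commute[of b a])
  ultimately show ?thesis by (simp add: power2_norm_eq_inner)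
qed
lemma norm_diff_scale_sq:
  fixes w z :: "'a::real_inner"
  shows "norm (w - t *\<^sub>R z)^2 = norm w ^2 - 2 * t * inner w z + t^2 * (norm z)^2"
proof -
  have "norm (w - t *\<^sub>R z)^2 = inner w w - 2 * t * inner w z + t^2 * inner z z"
    by (simp only: power2_norm_eq_inner) (simp add: inner_diff_left inner_diff_right inner_commute[of z w] power2_eq_square algebra_simps)
  then show ?thesis by (simp add: power2_norm_eq_inner)
qed

lemma proj_exists:
  fixes M :: "'a::{real_inner,complete_space} set"
  assumes sM: "subspace M" and cM: "closed M"
  shows "\<exists>m\<in>M. \<forall>z\<in>M. inner (y - m) z = 0"
proof -
  define D where "D = (\<lambda>m. norm (y - m)) ` M"
  define d where "d = Inf D"
  have ne: "D \<noteq> {}" using sM by (auto simp: D_def subspace_def)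
  have bdd: "bdd_below D" unfolding D_def by (rule bdd_belowI[of _ 0]) auto
  have dle: "d \<le> norm (y - z)" if "z \<in> M" for z
    unfolding d_def by (rule cInf_lower) (use that bdd in \<open>auto simp: D_def\<close>)
  have d0: "0 \<le> d" unfolding d_def using ne by (intro cInf_greatest) (auto simp: D_def)
  have "\<exists>m. m \<in> M \<and> norm (y - m) < d + 1 / (real n + 1)" for n
  proof -
    have "Inf D < d + 1 / (real n + 1)" unfolding d_def by simp
    then obtain t where "t \<in> D" "t < d + 1 / (real n + 1)"
      using cInf_lessD[OF ne] by blast
    then show ?thesis by (auto simp: D_def)
  qed
  then have "\<forall>n. \<exists>m. m \<in> M \<and> norm (y - m) < d + 1 / (real n + 1)" by blast
  then have "\<exists>m. \<forall>n. m n \<in> M \<and> norm (y - m n) < d + 1 / (real n + 1)" by (rule choice)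
  then obtain m where mm: "\<forall>n. m n \<in> M \<and> norm (y - m n) < d + 1 / (real n + 1)" by blast
  have mM: "\<And>n. m n \<in> M" and mlt: "\<And>n. norm (y - m n) < d + 1 / (real n + 1)"
    using mm by auto
  define e where "e n = 1 / (real n + 1)" for n
  have e0: "0 < e n" "e n \<le> 1" for n by (auto simp: e_def field_simps)
  have para: "norm (m n - m k) ^ 2 \<le> 2 * (2*d+1) * (e n + e k)" for n k
  proof -
    have mid: "(m n + m k) /\<^sub>R 2 \<in> M"
      using sM mM by (simp add: subspace_add subspace_scale)
    have "2 * d \<le> norm (2 *\<^sub>R y - (m n + m k))"
    proof -
      have "d \<le> norm (y - (m n + m k) /\<^sub>R 2)" using dle[OF mid] .
      also have "norm (y - (m n + m k) /\<^sub>R 2) = norm (2 *\<^sub>R y - (m n + m k)) / 2"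
      proof -
        have "y - (m n + m k) /\<^sub>R 2 = (1/2) *\<^sub>R (2 *\<^sub>R y - (m n + m k))"
          by (simp add: algebra_simps)
        then show ?thesis by simp
      qed
      finally show ?thesis by simp
    qed
    hence "(2 * d)^2 \<le> norm (2 *\<^sub>R y - (m n + m k)) ^ 2"
      using d0 by (intro power_mono) auto
    hence sq: "4 * d^2 \<le> norm (2 *\<^sub>R y - (m n + m k)) ^ 2"
      by (simp add: power_mult_distrib)
    have pl: "norm (m n - m k) ^ 2 + norm (2 *\<^sub>R y - (m n + m k)) ^ 2
        = 2 * norm (y - m n) ^ 2 + 2 * norm (y - m k) ^ 2"
    proof -
      have a: "m n - m k = (y - m k) - (y - m n)" by simp
      have b: "2 *\<^sub>R y - (m n + m k) = (y - m k) + (y - m n)" by (simp add: algebra_simps scaleR_2)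
      show ?thesis unfolding a b using parallelogram_law[of "y - m k" "y - m n"] by simp
    qed
    have b1: "norm (y - m n) ^ 2 \<le> (d + e n) ^ 2"
      using mlt[of n] by (intro power_mono) (auto simp: e_def)
    have b2: "norm (y - m k) ^ 2 \<le> (d + e k) ^ 2"
      using mlt[of k] by (intro power_mono) (auto simp: e_def)
    have c1: "(d + e n)^2 - d^2 \<le> (2*d+1) * e n"
      using e0[of n] d0 by (simp add: power2_eq_square algebra_simps)
    have c2: "(d + e k)^2 - d^2 \<le> (2*d+1) * e k"
      using e0[of k] d0 by (simp add: power2_eq_square algebra_simps)
    show ?thesis using pl sq b1 b2 c1 c2 by (simp add: algebra_simps)
  qed
  have "Cauchy m"
  proof (rule metric_CauchyI)
    fix \<epsilon> :: real assume "\<epsilon> > 0"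
    define c where "c = 4 * (2*d+1)"
    have c0: "c > 0" using d0 by (simp add: c_def)
    obtain N :: nat where N: "real N > c / \<epsilon>^2" using reals_Archimedean2 by blast
    show "\<exists>N. \<forall>n\<ge>N. \<forall>k\<ge>N. dist (m n) (m k) < \<epsilon>"
    proof (intro exI allI impI)
      fix n k assume nN: "n \<ge> N" and kN: "k \<ge> N"
      have en: "e n \<le> 1 / (real N + 1)" "e k \<le> 1 / (real N + 1)"
        using nN kN by (auto simp: e_def intro!: divide_left_mono)
      have "e n + e k \<le> 2 / (real N + 1)" using en by simp
      then have "2*(2*d+1)*(e n + e k) \<le> 2*(2*d+1)*(2 / (real N + 1))"
        by (intro mult_left_mono) (use d0 in auto)
      then have "norm (m n - m k)^2 \<le> c / (real N + 1)"
        using para[of n k] unfolding c_def by simp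
      also have "\<dots> < \<epsilon>^2"
      proof -
        have "c / \<epsilon>^2 < real N + 1" using N by simp
        then have "c < (real N + 1) * \<epsilon>^2" using \<open>\<epsilon>>0\<close> by (simp add: divide_less_eq)
        then show ?thesis by (simp add: divide_less_eq mult.commute)
      qed
      finally have "norm (m n - m k)^2 < \<epsilon>^2" .
      then show "dist (m n) (m k) < \<epsilon>"
        using \<open>\<epsilon>>0\<close> by (simp add: dist_norm power_less_imp_less_base)
    qed
  qed
  then obtain m0 where lim: "m \<longlonglongrightarrow> m0" using Cauchy_convergent_iff convergent_def by blast
  have m0M: "m0 \<in> M" by (rule closed_sequentially[OF cM _ lim]) (use mM in blast)
  have L1: "(\<lambda>n. norm (y - m n)) \<longlonglongrightarrow> norm (y - m0)"
    by (intro tendsto_intros lim)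
  have L2: "(\<lambda>n. d + e n) \<longlonglongrightarrow> d + 0"
  proof -
    have "e = (\<lambda>n. inverse (real (Suc n)))" by (auto simp: e_def fun_eq_iff inverse_eq_divide)
    then have "e \<longlonglongrightarrow> 0" using LIMSEQ_inverse_real_of_nat by simp
    then show ?thesis by (intro tendsto_intros)
  qed
  have "\<forall>n\<ge>0. norm (y - m n) \<le> d + e n" using mlt by (simp add: e_def less_imp_le)
  then have "norm (y - m0) \<le> d + 0" by (intro LIMSEQ_le[OF L1 L2]) blast
  then have m0le: "norm (y - m0) \<le> d" by simp
  show ?thesis
  proof (intro bexI[OF _ m0M] ballI)
    fix z assume zM: "z \<in> M"
    define w where "w = y - m0"
    define c where "c = inner w z"
    show "inner (y - m0) z = 0"
    proof (rule ccontr)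
      assume "inner (y - m0) z \<noteq> 0"
      hence cne: "c \<noteq> 0" and zne: "z \<noteq> 0" by (auto simp: c_def w_def)
      define t where "t = c / (norm z)^2"
      have "m0 + t *\<^sub>R z \<in> M" using sM m0M zM by (simp add: subspace_add subspace_scale)
      hence "d \<le> norm (y - (m0 + t *\<^sub>R z))" by (rule dle)
      moreover have "y - (m0 + t *\<^sub>R z) = w - t *\<^sub>R z" by (simp add: w_def)
      ultimately have "d \<le> norm (w - t *\<^sub>R z)" by simp
      moreover have "norm w \<le> d" using m0le by (simp add: w_def)
      ultimately have "norm w \<le> norm (w - t *\<^sub>R z)" by linarith
      hence "norm w ^2 \<le> norm (w - t *\<^sub>R z)^2" by (rule power_mono) simp
      also have "norm (w - t *\<^sub>R z)^2 = norm w ^2 - 2 * t * c + t^2 * (norm z)^2"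
        using norm_diff_scale_sq[of w t z] by (simp add: c_def)
      also have "t^2 * (norm z)^2 = t * c" using zne by (simp add: t_def power2_eq_square)
      finally have "0 \<le> - t * c" by (simp add: mult.commute)
      moreover have "t * c > 0"
      proof -
        have a: "c*c>0" using cne by (metis not_real_square_gt_zero)
        have b: "(norm z)^2 > 0" using zne by simp
        have "t*c = (c*c)/(norm z)^2" by (simp add: t_def)
        then show ?thesis using a b by (simp add: divide_pos_pos)
      qed
      ultimately show False by simp
    qed
  qed
qed


lemma subspace_closure_gen:
  fixes S :: "'a::real_normed_vector set"
  assumes "subspace S"
  shows "subspace (closure S)"
  unfolding subspace_def
proof (intro conjI ballI allI)
  show "0 \<in> closure S" using assms closure_subset subspace_0 by blast
next
  fix x y assume "x \<in> closure S" "y \<in> closure S"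
  then obtain a b where a: "\<forall>n. a n \<in> S" "a \<longlonglongrightarrow> x" and b: "\<forall>n. b n \<in> S" "b \<longlonglongrightarrow> y"
    unfolding closure_sequential by blast
  have "(\<lambda>n. a n + b n) \<longlonglongrightarrow> x + y" using a b by (intro tendsto_intros)
  moreover have "\<forall>n. a n + b n \<in> S" using a b assms by (simp add: subspace_add)
  ultimately show "x + y \<in> closure S" unfolding closure_sequential by (intro exI[of _ "\<lambda>n. a n + b n"]) auto
next
  fix c :: real and x assume "x \<in> closure S"
  then obtain a where a: "\<forall>n. a n \<in> S" "a \<longlonglongrightarrow> x"
    unfolding closure_sequential by blast
  have "(\<lambda>n. c *\<^sub>R a n) \<longlonglongrightarrow> c *\<^sub>R x" using a by (intro tendsto_intros)
  moreover have "\<forall>n. c *\<^sub>R a n \<in> S" using a assms by (simp add: subspace_scale)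
  ultimately show "c *\<^sub>R x \<in> closure S" unfolding closure_sequential by (intro exI[of _ "\<lambda>n. c *\<^sub>R a n"]) auto
qed

definition proj :: "'a::{real_inner,complete_space} set \<Rightarrow> 'a \<Rightarrow> 'a" where
  "proj M y = (SOME m. m \<in> M \<and> (\<forall>z\<in>M. inner (y - m) z = 0))"

lemma proj_prop:
  fixes M :: "'a::{real_inner,complete_space} set"
  assumes "subspace M" "closed M"
  shows "proj M y \<in> M" "\<forall>z\<in>M. inner (y - proj M y) z = 0"
proof -
  have "\<exists>m. m \<in> M \<and> (\<forall>z\<in>M. inner (y - m) z = 0)" using proj_exists[OF assms, of y] by blast
  from someI_ex[OF this] show "proj M y \<in> M" "\<forall>z\<in>M. inner (y - proj M y) z = 0"
    unfolding proj_def by blast+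
qed

lemma proj_unique:
  fixes M :: "'a::{real_inner,complete_space} set"
  assumes sM: "subspace M" and cM: "closed M" and mM: "m \<in> M" and orth: "\<forall>z\<in>M. inner (y - m) z = 0"
  shows "proj M y = m"
proof -
  define p where "p = proj M y"
  have pM: "p \<in> M" and po: "\<forall>z\<in>M. inner (y - p) z = 0" using proj_prop[OF sM cM] unfolding p_def by auto
  define d where "d = p - m"
  have dM: "d \<in> M" unfolding d_def using pM mM sM by (simp add: subspace_diff)
  have "inner d d = inner (y - m) d - inner (y - p) d"
    unfolding d_def by (simp add: inner_diff_left)
  also have "\<dots> = 0" using orth po dM by simp
  finally have "d = 0" by simp
  then show ?thesis unfolding d_def p_def by simp
qed

lemma proj_bounded_linear:
  fixes M :: "'a::{real_inner,complete_space} set"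
  assumes sM: "subspace M" and cM: "closed M"
  shows "bounded_linear (proj M)"
proof (rule bounded_linear_intro[where K=1])
  note P = proj_prop[OF sM cM]
  fix a b :: 'a and c :: real
  show "proj M (a + b) = proj M a + proj M b"
  proof (rule proj_unique[OF sM cM])
    show "proj M a + proj M b \<in> M" using P sM by (simp add: subspace_add)
    show "\<forall>z\<in>M. inner (a + b - (proj M a + proj M b)) z = 0"
    proof
      fix z assume "z \<in> M"
      have "inner (a + b - (proj M a + proj M b)) z = inner (a - proj M a) z + inner (b - proj M b) z"
        by (simp add: inner_diff_left inner_add_left)
      then show "inner (a + b - (proj M a + proj M b)) z = 0" using P \<open>z \<in> M\<close> by simp
    qed
  qed
  show "proj M (c *\<^sub>R a) = c *\<^sub>R proj M a"
  proof (rule proj_unique[OF sM cM])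
    show "c *\<^sub>R proj M a \<in> M" using P sM by (simp add: subspace_scale)
    show "\<forall>z\<in>M. inner (c *\<^sub>R a - c *\<^sub>R proj M a) z = 0"
    proof
      fix z assume "z \<in> M"
      have "inner (c *\<^sub>R a - c *\<^sub>R proj M a) z = c * inner (a - proj M a) z"
        by (simp add: inner_diff_left right_diff_distrib)
      then show "inner (c *\<^sub>R a - c *\<^sub>R proj M a) z = 0" using P \<open>z \<in> M\<close> by simp
    qed
  qed
  show "norm (proj M a) \<le> norm a * 1"
  proof -
    have "inner (a - proj M a) (proj M a) = 0" using P by blast
    then have "orthogonal (proj M a) (a - proj M a)"
      by (simp add: orthogonal_def inner_commute)
    then have eq: "(norm (proj M a + (a - proj M a)))\<^sup>2 = (norm (proj M a))\<^sup>2 + (norm (a - proj M a))\<^sup>2"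
      by (rule norm_add_Pythagorean)
    have "proj M a + (a - proj M a) = a" by simp
    then have "(norm a)\<^sup>2 = (norm (proj M a))\<^sup>2 + (norm (a - proj M a))\<^sup>2" using eq by simp
    moreover have "0 \<le> (norm (a - proj M a))\<^sup>2" by simp
    ultimately have "(norm (proj M a))\<^sup>2 \<le> (norm a)\<^sup>2" by linarith
    then have "norm (proj M a) \<le> norm a" using power2_le_imp_le norm_ge_zero by blast
    then show ?thesis by simp
  qed
qed

lemma pow_skew:
  fixes X :: "'a::real_inner \<Rightarrow> 'a"
  assumes sk: "\<And>a b. inner (X a) b = - inner a (X b)"
  shows "inner ((X ^^ k) a) b = (-1)^k * inner a ((X ^^ k) b)"
proof (induction k arbitrary: b)
  case 0
  then show ?case by simp
next
  case (Suc k)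
  have "inner ((X ^^ Suc k) a) b = inner (X ((X ^^ k) a)) b" by simp
  also have "\<dots> = - inner ((X ^^ k) a) (X b)" by (rule sk)
  also have "\<dots> = - ((-1)^k * inner a ((X ^^ k) (X b)))" using Suc by simp
  also have "(X ^^ k) (X b) = (X ^^ Suc k) b" by (simp add: funpow_swap1)
  finally show ?case by simp
qed

lemma odd_pow_self:
  fixes X :: "'a::real_inner \<Rightarrow> 'a"
  assumes sk: "\<And>a b. inner (X a) b = - inner a (X b)" and "odd n"
  shows "inner a ((X ^^ n) a) = 0"
proof -
  have "inner ((X ^^ n) a) a = - inner a ((X ^^ n) a)"
    using pow_skew[OF sk, of n a a] \<open>odd n\<close> by simp
  then show ?thesis by (simp add: inner_commute)
qed

definition goodF :: "('a::real_inner \<Rightarrow> 'a) \<Rightarrow> 'a set \<Rightarrow> bool" where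
  "goodF X F \<longleftrightarrow> (\<forall>u\<in>F. \<forall>v\<in>F. u \<noteq> v \<longrightarrow> (\<forall>k l. inner ((X ^^ k) u) ((X ^^ l) v) = 0))"

lemma anti_decomp:
  fixes X :: "'a::{real_inner,complete_space} \<Rightarrow> 'a"
  assumes bl: "bounded_linear X" and sk: "\<And>a b. inner (X a) b = - inner a (X b)"
  shows "\<exists>Ev Od. subspace Ev \<and> closed Ev \<and> subspace Od \<and> closed Od \<and>
           (\<forall>a\<in>Ev. \<forall>b\<in>Od. inner a b = 0) \<and> X ` Ev \<subseteq> Od \<and> X ` Od \<subseteq> Ev \<and>
           (\<forall>y. y = proj Ev y + proj Od y)"
proof -
  have "\<exists>F\<in>{F. goodF X F}. \<forall>G\<in>{F. goodF X F}. F \<subseteq> G \<longrightarrow> G = F"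
  proof (rule Zorn_Lemma2, intro ballI)
    fix C assume C: "C \<in> chains {F. goodF X F}"
    show "\<exists>U\<in>{F. goodF X F}. \<forall>G\<in>C. G \<subseteq> U"
    proof (intro bexI[of _ "\<Union>C"])
      show "\<forall>G\<in>C. G \<subseteq> \<Union>C" by blast
      show "\<Union>C \<in> {F. goodF X F}"
        unfolding mem_Collect_eq goodF_def
      proof (intro ballI impI allI)
        fix u v k l assume u: "u \<in> \<Union>C" and v: "v \<in> \<Union>C" and uv: "u \<noteq> v"
        obtain F1 where F1: "F1 \<in> C" "u \<in> F1" using u by blast
        obtain F2 where F2: "F2 \<in> C" "v \<in> F2" using v by blast
        have g1: "goodF X F1" and g2: "goodF X F2" using F1 F2 chainsD2[OF C] by auto
        from chainsD[OF C F1(1) F2(1)] show "inner ((X ^^ k) u) ((X ^^ l) v) = 0"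
        proof
          assume "F1 \<subseteq> F2" then show ?thesis using g2 F1 F2 uv unfolding goodF_def by blast
        next
          assume "F2 \<subseteq> F1" then show ?thesis using g1 F1 F2 uv unfolding goodF_def by blast
        qed
      qed
    qed
  qed
  then obtain F where gF: "goodF X F" and maxF: "\<And>G. goodF X G \<Longrightarrow> F \<subseteq> G \<Longrightarrow> G = F" by blast
  define GE where "GE = {(X ^^ (2*k)) u | u k. u \<in> F}"
  define GO where "GO = {(X ^^ (2*k+1)) u | u k. u \<in> F}"
  define Ev where "Ev = closure (span GE)"
  define Od where "Od = closure (span GO)"
  have sE: "subspace Ev" unfolding Ev_def by (intro subspace_closure_gen subspace_span)
  have sO: "subspace Od" unfolding Od_def by (intro subspace_closure_gen subspace_span)
  have cE: "closed Ev" and cO: "closed Od" unfolding Ev_def Od_def by auto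
  have GEE: "GE \<subseteq> Ev" unfolding Ev_def using span_superset closure_subset by blast
  have GOO: "GO \<subseteq> Od" unfolding Od_def using span_superset closure_subset by blast
  have pows: "(X ^^ n) v \<in> GE \<union> GO" if "v \<in> F" for n v
  proof (cases "even n")
    case True then obtain k where k: "n = 2*k" by blast
    have "(X ^^ n) v \<in> GE" unfolding GE_def k using that by blast
    then show ?thesis by simp
  next
    case False then obtain k where k: "n = 2*k+1" using oddE by blast
    have "(X ^^ n) v \<in> GO" unfolding GO_def k using that by blast
    then show ?thesis by simp
  qed
  have orthG: "\<forall>a\<in>GE. \<forall>b\<in>GO. inner a b = 0"
  proof (intro ballI)
    fix a b assume "a \<in> GE" "b \<in> GO"
    then obtain u k v l where a: "a = (X ^^ (2*k)) u" "u \<in> F" and b: "b = (X ^^ (2*l+1)) v" "v \<in> F"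
      unfolding GE_def GO_def by blast
    show "inner a b = 0"
    proof (cases "u = v")
      case True
      have "inner a b = (-1)^(2*k) * inner u ((X ^^ (2*k)) ((X ^^ (2*l+1)) u))"
        unfolding a b True by (rule pow_skew[OF sk])
      also have "(X ^^ (2*k)) ((X ^^ (2*l+1)) u) = (X ^^ (2*k + (2*l+1))) u"
        by (simp only: funpow_add o_apply)
      also have "inner u \<dots> = 0" by (rule odd_pow_self[OF sk]) simp
      finally show ?thesis by simp
    next
      case False
      then show ?thesis using gF a b unfolding goodF_def by blast
    qed
  qed
  have EO: "\<forall>a\<in>Ev. \<forall>b\<in>Od. inner a b = 0"
    unfolding Ev_def Od_def by (rule orth_closure_span[OF orthG])
  have lin: "linear X" using bl bounded_linear.linear by blast
  have contX: "\<And>x. continuous (at x) X" using bl by (simp add: linear_continuous_at)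
  have img: "X ` closure (span A) \<subseteq> closure (span B)" if AB: "X ` A \<subseteq> B" for A B
  proof -
    define T where "T = X -` closure (span B)"
    have sT: "subspace T" unfolding T_def
      using subspace_closure_gen[OF subspace_span[of B]] lin
      by (auto simp: subspace_def linear_add linear_scale linear_0)
    have cT: "closed T" unfolding T_def by (rule continuous_closed_vimage[OF _ contX]) simp
    have "A \<subseteq> T"
    proof
      fix a assume "a \<in> A"
      then have "X a \<in> B" using AB by blast
      then have "X a \<in> closure (span B)" using span_superset closure_subset by blast
      then show "a \<in> T" unfolding T_def by simp
    qed
    then have "closure (span A) \<subseteq> T" by (intro closure_minimal span_minimal sT cT)
    then show ?thesis unfolding T_def by blast
  qed
  have XEO: "X ` Ev \<subseteq> Od" unfolding Ev_def Od_def
  proof (rule img)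
    show "X ` GE \<subseteq> GO"
    proof
      fix b assume "b \<in> X ` GE"
      then obtain a where "a \<in> GE" "b = X a" by blast
      then obtain u k where "b = X ((X ^^ (2*k)) u)" "u \<in> F" unfolding GE_def by blast
      then have "b = (X ^^ (2*k+1)) u" by simp
      then show "b \<in> GO" using \<open>u \<in> F\<close> unfolding GO_def by blast
    qed
  qed
  have XOE: "X ` Od \<subseteq> Ev" unfolding Ev_def Od_def
  proof (rule img)
    show "X ` GO \<subseteq> GE"
    proof
      fix b assume "b \<in> X ` GO"
      then obtain a where "a \<in> GO" "b = X a" by blast
      then obtain u k where "b = X ((X ^^ (2*k+1)) u)" "u \<in> F" unfolding GO_def by blast
      then have "b = (X ^^ (2*(k+1))) u" by simp
      then show "b \<in> GE" using \<open>u \<in> F\<close> unfolding GE_def by blast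
    qed
  qed
  have dec: "y = proj Ev y + proj Od y" for y
  proof (rule ccontr)
    assume ne: "y \<noteq> proj Ev y + proj Od y"
    define r where "r = y - proj Ev y - proj Od y"
    have r0: "r \<noteq> 0" using ne unfolding r_def by (simp add: algebra_simps)
    note PE = proj_prop[OF sE cE, of y] and PO = proj_prop[OF sO cO, of y]
    have rE: "inner r z = 0" if "z \<in> Ev" for z
    proof -
      have "inner (proj Od y) z = 0" using EO PO(1) that by (simp add: inner_commute)
      then show ?thesis using PE(2) that unfolding r_def by (simp add: inner_diff_left)
    qed
    have rO: "inner r z = 0" if "z \<in> Od" for z
    proof -
      have "inner (proj Ev y) z = 0" using EO PE(1) that by simp
      then show ?thesis using PO(2) that unfolding r_def by (simp add: inner_diff_left algebra_simps)
    qed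
    have rpow: "inner r ((X ^^ n) v) = 0" if "v \<in> F" for n v
    proof -
      have "(X ^^ n) v \<in> GE \<union> GO" by (rule pows[OF that])
      then show ?thesis
      proof
        assume "(X ^^ n) v \<in> GE" then have "(X ^^ n) v \<in> Ev" using GEE by blast
        then show ?thesis by (rule rE)
      next
        assume "(X ^^ n) v \<in> GO" then have "(X ^^ n) v \<in> Od" using GOO by blast
        then show ?thesis by (rule rO)
      qed
    qed
    have rF: "r \<notin> F"
    proof
      assume "r \<in> F"
      then have "inner r ((X ^^ 0) r) = 0" by (rule rpow)
      then show False using r0 by simp
    qed
    have "goodF X (insert r F)"
      unfolding goodF_def
    proof (intro ballI impI allI)
      fix u v k l assume u: "u \<in> insert r F" and v: "v \<in> insert r F" and uv: "u \<noteq> v"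
      have key: "inner ((X ^^ k) r) ((X ^^ l) w) = 0" if "w \<in> F" for k l w
      proof -
        have "inner ((X ^^ k) r) ((X ^^ l) w) = (-1)^k * inner r ((X ^^ k) ((X ^^ l) w))"
          by (rule pow_skew[OF sk])
        also have "(X ^^ k) ((X ^^ l) w) = (X ^^ (k+l)) w" by (simp only: funpow_add o_apply)
        finally show ?thesis using rpow[OF that] by simp
      qed
      show "inner ((X ^^ k) u) ((X ^^ l) v) = 0"
      proof (cases "u = r")
        case True
        then have "v \<in> F" using v uv by auto
        then show ?thesis using key True by simp
      next
        case False
        then have uF: "u \<in> F" using u by auto
        show ?thesis
        proof (cases "v = r")
          case True
          then show ?thesis using key[OF uF, of l k] by (simp add: inner_commute)
        next
          case False
          then have "v \<in> F" using v by auto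
          then show ?thesis using gF uF uv unfolding goodF_def by blast
        qed
      qed
    qed
    then have "insert r F = F" by (rule maxF) blast
    then show False using rF by blast
  qed
  show ?thesis
    by (intro exI[of _ Ev] exI[of _ Od] conjI sE cE sO cO EO XEO XOE allI dec)
qed


lemma neg_conj:
  fixes x :: "'a::{real_inner,complete_space} \<Rightarrow>\<^sub>L 'a"
  assumes xs: "x \<in> skew_ops"
  shows "\<exists>G\<in>orth_group. G o\<^sub>L G = id_blinfun \<and> G o\<^sub>L x o\<^sub>L G = - x"
proof -
  define X where "X = blinfun_apply x"
  have bl: "bounded_linear X" unfolding X_def by (rule blinfun.bounded_linear_right)
  have sk: "\<And>a b. inner (X a) b = - inner a (X b)" using xs unfolding X_def skew_ops_def by blast
  have lin: "linear X" using bl bounded_linear.linear by blast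
  obtain Ev Od where sE: "subspace Ev" and cE: "closed Ev" and sO: "subspace Od" and cO: "closed Od"
    and EO: "\<forall>a\<in>Ev. \<forall>b\<in>Od. inner a b = 0" and XEO: "X ` Ev \<subseteq> Od" and XOE: "X ` Od \<subseteq> Ev"
    and dec: "\<And>y. y = proj Ev y + proj Od y"
    using anti_decomp[OF bl sk] by blast
  have PE: "\<And>y. proj Ev y \<in> Ev" using proj_prop[OF sE cE] by blast
  have PO: "\<And>y. proj Od y \<in> Od" using proj_prop[OF sO cO] by blast
  have OE: "inner b a = 0" if "a \<in> Ev" "b \<in> Od" for a b
    using EO that by (simp add: inner_commute)
  have pEsum: "proj Ev (e + w) = e" if e: "e \<in> Ev" and w: "w \<in> Od" for e w
  proof (rule proj_unique[OF sE cE e])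
    show "\<forall>z\<in>Ev. inner (e + w - e) z = 0" using OE w by simp
  qed
  define g where "g y = 2 *\<^sub>R proj Ev y - y" for y
  have gsum: "g (e + w) = e - w" if "e \<in> Ev" "w \<in> Od" for e w
    unfolding g_def pEsum[OF that] by (simp add: scaleR_2)
  have galt: "g y = proj Ev y - proj Od y" for y
  proof -
    have "g y = g (proj Ev y + proj Od y)" using dec[of y] by simp
    also have "\<dots> = proj Ev y - proj Od y" by (rule gsum[OF PE PO])
    finally show ?thesis .
  qed
  have blg: "bounded_linear g"
  proof -
    have "bounded_linear (\<lambda>y. 2 *\<^sub>R proj Ev y)"
      by (rule bounded_linear_compose[OF bounded_linear_scaleR_right proj_bounded_linear[OF sE cE]])
    then have "bounded_linear (\<lambda>y. 2 *\<^sub>R proj Ev y - y)"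
      by (rule bounded_linear_sub) simp
    then show ?thesis unfolding g_def[abs_def] .
  qed
  define G where "G = Blinfun g"
  have Gapp: "blinfun_apply G = g" unfolding G_def by (rule bounded_linear_Blinfun_apply[OF blg])
  have iso: "inner (g a) (g b) = inner a b" for a b
  proof -
    have c1: "inner (proj Ev a) (proj Od b) = 0" using EO PE PO by blast
    have c2: "inner (proj Od a) (proj Ev b) = 0" using OE PE PO by blast
    have "inner a b = inner (proj Ev a + proj Od a) (proj Ev b + proj Od b)"
      by (simp only: dec[of a, symmetric] dec[of b, symmetric])
    also have "\<dots> = inner (proj Ev a) (proj Ev b) + inner (proj Od a) (proj Od b)"
      by (simp add: inner_add_left inner_add_right c1 c2)
    also have "\<dots> = inner (proj Ev a - proj Od a) (proj Ev b - proj Od b)"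
      by (simp add: inner_diff_left inner_diff_right c1 c2)
    also have "\<dots> = inner (g a) (g b)" by (simp add: galt)
    finally show ?thesis by simp
  qed
  have gg: "g (g a) = a" for a
  proof -
    have m: "- proj Od a \<in> Od" using PO sO by (simp add: subspace_neg)
    have "g (g a) = g (proj Ev a + (- proj Od a))" by (simp add: galt)
    also have "\<dots> = proj Ev a - (- proj Od a)" by (rule gsum[OF PE m])
    also have "\<dots> = a" using dec[of a] by simp
    finally show ?thesis .
  qed
  have gXg: "g (X (g a)) = - X a" for a
  proof -
    have m1: "- X (proj Od a) \<in> Ev" using XOE PO sE by (simp add: subspace_neg image_subset_iff)
    have m2: "X (proj Ev a) \<in> Od" using XEO PE by (simp add: image_subset_iff)
    have "X (g a) = - X (proj Od a) + X (proj Ev a)"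
      unfolding galt using lin by (simp add: linear_diff)
    then have "g (X (g a)) = - X (proj Od a) - X (proj Ev a)" using gsum[OF m1 m2] by simp
    also have "\<dots> = - (X (proj Ev a) + X (proj Od a))" by simp
    also have "X (proj Ev a) + X (proj Od a) = X a"
      using lin dec[of a] by (metis linear_add)
    finally show ?thesis .
  qed
  have "G \<in> orth_group"
    unfolding orth_group_def mem_Collect_eq Gapp
  proof (intro conjI allI iso)
    show "surj g" by (metis gg surjI)
  qed
  moreover have "G o\<^sub>L G = id_blinfun" by (rule blinfun_eqI) (simp add: Gapp gg)
  moreover have "G o\<^sub>L x o\<^sub>L G = - x" by (rule blinfun_eqI) (simp add: Gapp gXg[unfolded X_def] uminus_blinfun.rep_eq)
  ultimately show ?thesis by blast
qed

theorem theorem4p7: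
  fixes W :: "('a::{real_inner, complete_space} \<Rightarrow>\<^sub>L 'a) set"
  assumes dim: "\<exists>S::'a set. independent S \<and> finite S \<and> card S = 3"
    and sub: "W \<subseteq> skew_ops"
    and ne: "W \<noteq> {}"
    and op: "openin (top_of_set skew_ops) W"
    and cone: "convex_cone_set W"
    and inv: "Ad_invariant W"
  shows "W = skew_ops"
proof -
  obtain x0 where x0: "x0 \<in> W" using ne by blast
  then have x0s: "x0 \<in> skew_ops" using sub by blast
  obtain G where G: "G \<in> orth_group" "G o\<^sub>L G = id_blinfun" "G o\<^sub>L x0 o\<^sub>L G = - x0"
    using neg_conj[OF x0s] by blast
  have "G o\<^sub>L x0 o\<^sub>L G \<in> W" using inv G x0 unfolding Ad_invariant_def by blast
  then have "- x0 \<in> W" using G by simp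
  then have "x0 + - x0 \<in> W" using cone x0 unfolding convex_cone_set_def by blast
  then have W0: "0 \<in> W" by simp
  obtain e where e: "e > 0" "\<forall>x'\<in>skew_ops. dist x' 0 < e \<longrightarrow> x' \<in> W"
    using op W0 unfolding openin_euclidean_subtopology_iff by blast
  show ?thesis
  proof
    show "W \<subseteq> skew_ops" by (rule sub)
    show "skew_ops \<subseteq> W"
    proof
      fix y :: "'a \<Rightarrow>\<^sub>L 'a" assume ys: "y \<in> skew_ops"
      show "y \<in> W"
      proof (cases "y = 0")
        case True then show ?thesis using W0 by simp
      next
        case False
        then have ny: "norm y > 0" by simp
        define c where "c = e / (2 * norm y)"
        have c0: "c > 0" unfolding c_def using e ny by simp
        have cys: "c *\<^sub>R y \<in> skew_ops" using ys unfolding skew_ops_def by (simp add: scaleR_blinfun.rep_eq)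
        have "dist (c *\<^sub>R y) 0 = c * norm y" using c0 by simp
        also have "\<dots> = e / 2" unfolding c_def using ny by simp
        also have "\<dots> < e" using e by simp
        finally have "c *\<^sub>R y \<in> W" using e cys by blast
        moreover have sc: "\<forall>t>0. \<forall>x\<in>W. t *\<^sub>R x \<in> W" using cone unfolding convex_cone_set_def by blast
        moreover have "1/c > 0" using c0 by simp
        ultimately have "(1/c) *\<^sub>R (c *\<^sub>R y) \<in> W" by blast
        then show ?thesis using c0 by simp
      qed
    qed
  qed
qed


end
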